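(* Let $q$ be a prime power, $k,m,t$ positive integers, and $V=\mathbb F_{q^m}^{k+1}$. Let $H$ be an $\mathbb F_{q^m}$-hyperplane of $V$ and let $W\subseteq H$ be an $\mathbb F_q$-subspace with $\dim_{\mathbb F_q}(W)=t$ which is a linear cutting blocking set in $H$ (i.e. $\langle W\rangle_{\mathbb F_{q^m}}=H$ and $\langle W\cap H'\rangle_{\mathbb F_{q^m}}=H'$ for every $\mathbb F_{q^m}$-hyperplane $H'$ of $H$). Let $v\in V\setminus H$. Then $U=W+\langle v\rangle_{\mathbb F_{q^m}}$ is a cutting $[t+m,k+1]_{q^m/q}$ system.
   Context: An $[n,k]_{q^m/q}$ system is an $\mathbb F_q$-subspace $U$ of $\mathbb F_{q^m}^k$ with $\dim_{\mathbb F_q}(U)=n$ and $\langle U\rangle_{\mathbb F_{q^m}}=\mathbb F_{q^m}^k$. It is cutting if for every $\mathbb F_{q^m}$-hyperplane $\Pi$ of the ambient space one has $\langle \Pi\cap U\rangle_{\mathbb F_{q^m}}=\Pi$. *)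

theory Defs
  imports "HOL-Analysis.Analysis" "HOL-Number_Theory.Prime_Powers"
begin

text \<open>Big field F_{q^m} is a finite field type 'K; the small field F_q is a subfield
  Fq of it. Vectors of 'K^{k+1} are 'K ^ 'n with CARD('n) = k+1.
  F_{q^m}-linear notions use the library interpretation vec (vec.span, vec.subspace, vec.dim).\<close>

definition is_subfield :: "'K::field set \<Rightarrow> bool" where
  "is_subfield F \<longleftrightarrow> 0 \<in> F \<and> 1 \<in> F \<and> (\<forall>a\<in>F. \<forall>b\<in>F. a + b \<in> F \<and> a * b \<in> F)
     \<and> (\<forall>a\<in>F. - a \<in> F) \<and> (\<forall>a\<in>F. a \<noteq> 0 \<longrightarrow> inverse a \<in> F)"

definition F_subspace :: "'K::field set \<Rightarrow> ('K ^ 'n) set \<Rightarrow> bool" where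
  "F_subspace F U \<longleftrightarrow> 0 \<in> U \<and> (\<forall>x\<in>U. \<forall>y\<in>U. x + y \<in> U) \<and> (\<forall>c\<in>F. \<forall>x\<in>U. c *s x \<in> U)"

definition F_span :: "'K::field set \<Rightarrow> ('K ^ 'n) set \<Rightarrow> ('K ^ 'n) set" where
  "F_span F S = {x. \<exists>T c. finite T \<and> T \<subseteq> S \<and> (\<forall>v\<in>T. c v \<in> F) \<and> x = (\<Sum>v\<in>T. c v *s v)}"

definition F_independent :: "'K::field set \<Rightarrow> ('K ^ 'n) set \<Rightarrow> bool" where
  "F_independent F B \<longleftrightarrow> finite B \<and>
     (\<forall>c. (\<forall>v\<in>B. c v \<in> F) \<longrightarrow> (\<Sum>v\<in>B. c v *s v) = 0 \<longrightarrow> (\<forall>v\<in>B. c v = 0))"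

definition F_dim_eq :: "'K::field set \<Rightarrow> ('K ^ 'n) set \<Rightarrow> nat \<Rightarrow> bool" where
  "F_dim_eq F U n \<longleftrightarrow> (\<exists>B. B \<subseteq> U \<and> F_independent F B \<and> F_span F B = U \<and> card B = n)"

definition hyperplane :: "('K::field ^ 'n) set \<Rightarrow> bool" where
  "hyperplane P \<longleftrightarrow> vec.subspace P \<and> vec.dim P = CARD('n) - 1"

definition hyperplane_of :: "('K::field ^ 'n) set \<Rightarrow> ('K ^ 'n) set \<Rightarrow> bool" where
  "hyperplane_of H P \<longleftrightarrow> vec.subspace P \<and> P \<subseteq> H \<and> vec.dim P = vec.dim H - 1"

text \<open>[n,k]_{q^m/q} system (k = CARD('n) is the ambient dimension).\<close>
definition is_system :: "'K::field set \<Rightarrow> nat \<Rightarrow> nat \<Rightarrow> ('K ^ 'n) set \<Rightarrow> bool" where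
  "is_system F n k U \<longleftrightarrow> CARD('n) = k \<and> F_subspace F U \<and> F_dim_eq F U n \<and> vec.span U = UNIV"

definition cutting :: "('K::field ^ 'n) set \<Rightarrow> bool" where
  "cutting U \<longleftrightarrow> (\<forall>P. hyperplane P \<longrightarrow> vec.span (P \<inter> U) = P)"

end

theory Submission
  imports Defs
begin


lemma subfield_diff: "is_subfield F \<Longrightarrow> a \<in> F \<Longrightarrow> b \<in> F \<Longrightarrow> a - b \<in> F"
  unfolding is_subfield_def by (metis diff_conv_add_uminus)

lemma sf_mult: "is_subfield F \<Longrightarrow> a \<in> F \<Longrightarrow> b \<in> F \<Longrightarrow> a * b \<in> F"
  unfolding is_subfield_def by simp
lemma sf_neg: "is_subfield F \<Longrightarrow> a \<in> F \<Longrightarrow> - a \<in> F"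
  unfolding is_subfield_def by simp
lemma sf_inv: "is_subfield F \<Longrightarrow> a \<in> F \<Longrightarrow> a \<noteq> 0 \<Longrightarrow> inverse a \<in> F"
  unfolding is_subfield_def by simp

lemma F_subspace_sum:
  assumes "F_subspace F U" "finite T" "\<forall>v\<in>T. c v \<in> F \<and> v \<in> U"
  shows "(\<Sum>v\<in>T. c v *s v) \<in> U"
  using assms(2,3)
proof (induction T rule: finite_induct)
  case empty then show ?case using assms(1) by (simp add: F_subspace_def)
next
  case (insert x T) then show ?case using assms(1) by (simp add: F_subspace_def)
qed

lemma F_span_sub: "F_subspace F U \<Longrightarrow> B \<subseteq> U \<Longrightarrow> F_span F B \<subseteq> U"
  unfolding F_span_def using F_subspace_sum by blast

lemma F_span_sup: "1 \<in> F \<Longrightarrow> B \<subseteq> F_span F B"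
proof
  fix x assume "1 \<in> F" "x \<in> B"
  then show "x \<in> F_span F B" unfolding F_span_def
    by (intro CollectI exI[of _ "{x}"] exI[of _ "\<lambda>_. 1"]) auto
qed

lemma card_F_span:
  fixes B :: "('K::{field,finite} ^ 'n) set"
  assumes F: "is_subfield F" and ind: "F_independent F B"
  shows "card (F_span F B) = card F ^ card B"
proof -
  have fB: "finite B" using ind F_independent_def by blast
  let ?f = "\<lambda>c. (\<Sum>v\<in>B. c v *s v)"
  have 0: "0 \<in> F" using F is_subfield_def by blast
  have img: "F_span F B = ?f ` (B \<rightarrow>\<^sub>E F)"
  proof
    show "F_span F B \<subseteq> ?f ` (B \<rightarrow>\<^sub>E F)"
    proof
      fix x assume "x \<in> F_span F B"
      then obtain T c where T: "finite T" "T \<subseteq> B" "\<forall>v\<in>T. c v \<in> F" "x = (\<Sum>v\<in>T. c v *s v)"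
        unfolding F_span_def by blast
      define d where "d = (\<lambda>v. if v \<in> T then c v else if v \<in> B then 0 else undefined)"
      have "d \<in> B \<rightarrow>\<^sub>E F" using T 0 by (auto simp: d_def)
      moreover have "?f d = x"
      proof -
        have "?f d = (\<Sum>v\<in>T. d v *s v)"
          by (rule sum.mono_neutral_right[OF fB T(2)]) (simp add: d_def)
        also have "\<dots> = x" unfolding T(4) by (rule sum.cong) (simp_all add: d_def)
        finally show ?thesis .
      qed
      ultimately show "x \<in> ?f ` (B \<rightarrow>\<^sub>E F)" by blast
    qed
  next
    show "?f ` (B \<rightarrow>\<^sub>E F) \<subseteq> F_span F B"
    proof
      fix x assume "x \<in> ?f ` (B \<rightarrow>\<^sub>E F)"
      then obtain c where c: "c \<in> B \<rightarrow>\<^sub>E F" "x = ?f c" by blast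
      have "\<forall>v\<in>B. c v \<in> F" using c(1) by (simp add: PiE_iff)
      then show "x \<in> F_span F B" unfolding F_span_def using fB c(2) by blast
    qed
  qed
  have inj: "inj_on ?f (B \<rightarrow>\<^sub>E F)"
  proof
    fix c d assume c: "c \<in> B \<rightarrow>\<^sub>E F" and d: "d \<in> B \<rightarrow>\<^sub>E F" and eq: "?f c = ?f d"
    have "(\<Sum>v\<in>B. (c v - d v) *s v) = ?f c - ?f d"
      by (simp add: sum_subtractf vec.scale_left_diff_distrib)
    also have "\<dots> = 0" using eq by simp
    finally have z: "(\<Sum>v\<in>B. (c v - d v) *s v) = 0" .
    have cF: "\<forall>v\<in>B. c v - d v \<in> F" using c d subfield_diff[OF F] by (auto simp: PiE_iff)
    have "\<forall>v\<in>B. c v - d v = 0"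
      using spec[OF conjunct2[OF ind[unfolded F_independent_def]], of "\<lambda>v. c v - d v"] cF z by simp
    then show "c = d" using c d by (intro PiE_ext[OF c d]) auto
  qed
  have "card (F_span F B) = card (B \<rightarrow>\<^sub>E F)" by (simp add: img card_image[OF inj])
  also have "\<dots> = card F ^ card B" using fB by (simp add: card_PiE)
  finally show ?thesis .
qed

lemma F_basis_exists:
  fixes U :: "('K::{field,finite} ^ 'n) set"
  assumes F: "is_subfield F" and U: "F_subspace F U"
  shows "\<exists>B. B \<subseteq> U \<and> F_independent F B \<and> F_span F B = U"
proof -
  let ?P = "\<lambda>B. B \<subseteq> U \<and> F_independent F B"
  have P0: "?P {}" by (simp add: F_independent_def)
  have bd: "\<forall>B. ?P B \<longrightarrow> card B < CARD('K ^ 'n) + 1"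
  proof (intro allI impI)
    fix B :: "('K ^ 'n) set"
    have "card B \<le> CARD('K ^ 'n)" by (rule card_mono) auto
    then show "card B < CARD('K ^ 'n) + 1" by simp
  qed
  obtain B where B: "?P B" and mx: "\<forall>C. ?P C \<longrightarrow> card C \<le> card B"
    using Lattices_Big.ex_has_greatest_nat[OF P0 bd] by blast
  have one: "1 \<in> F" using F is_subfield_def by blast
  have fB: "finite B" using B F_independent_def by blast
  have Usp: "U \<subseteq> F_span F B"
  proof
    fix x assume xU: "x \<in> U"
    show "x \<in> F_span F B"
    proof (rule ccontr)
      assume nx: "x \<notin> F_span F B"
      then have xB: "x \<notin> B" using F_span_sup[OF one] by blast
      have "F_independent F (insert x B)"
        unfolding F_independent_def
      proof (intro conjI allI impI)
        show "finite (insert x B)" using fB by simp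
        fix c assume cF: "\<forall>v\<in>insert x B. c v \<in> F"
          and s: "(\<Sum>v\<in>insert x B. c v *s v) = 0"
        have s2: "c x *s x + (\<Sum>v\<in>B. c v *s v) = 0" using s fB xB by simp
        have cx: "c x = 0"
        proof (rule ccontr)
          assume cx: "c x \<noteq> 0"
          have "x = inverse (c x) *s (c x *s x)" using cx by (simp add: vector_smult_assoc)
          also have "c x *s x = - (\<Sum>v\<in>B. c v *s v)" using s2 by (simp add: eq_neg_iff_add_eq_0)
          also have "inverse (c x) *s - (\<Sum>v\<in>B. c v *s v) = (\<Sum>v\<in>B. (- (inverse (c x) * c v)) *s v)"
            by (simp add: vec.scale_sum_right vector_smult_assoc sum_negf)
          finally have xe: "x = (\<Sum>v\<in>B. (- (inverse (c x) * c v)) *s v)" .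
          have cxF: "c x \<in> F" using cF by simp
          have cl3: "inverse (c x) \<in> F" by (rule sf_inv[OF F cxF cx])
          have "\<forall>v\<in>B. - (inverse (c x) * c v) \<in> F"
          proof
            fix v assume "v \<in> B"
            then have "c v \<in> F" using cF by simp
            then show "- (inverse (c x) * c v) \<in> F" by (intro sf_neg[OF F] sf_mult[OF F cl3])
          qed
          then have "x \<in> F_span F B" unfolding F_span_def
            by (intro CollectI exI[of _ B] exI[of _ "\<lambda>v. - (inverse (c x) * c v)"] conjI fB subset_refl xe)
          then show False using nx by blast
        qed
        have "(\<Sum>v\<in>B. c v *s v) = 0" using s2 cx by simp
        moreover have "\<forall>v\<in>B. c v \<in> F" using cF by simp
        ultimately have "\<forall>v\<in>B. c v = 0"
          using spec[OF conjunct2[OF B[THEN conjunct2, unfolded F_independent_def]], of c] by blast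
        then show "\<forall>v\<in>insert x B. c v = 0" using cx by simp
      qed
      then have "?P (insert x B)" using B xU by simp
      then have "card (insert x B) \<le> card B" using mx by blast
      then show False using fB xB by simp
    qed
  qed
  have s1: "F_span F B \<subseteq> U" by (rule F_span_sub[OF U conjunct1[OF B]])
  have eq: "F_span F B = U" using s1 Usp by (rule subset_antisym)
  show ?thesis by (rule exI[of _ B]) (intro conjI conjunct1[OF B] conjunct2[OF B] eq)
qed

lemma sf_one: "is_subfield F \<Longrightarrow> 1 \<in> F"
  unfolding is_subfield_def by simp

lemma Fs_0: "F_subspace F W \<Longrightarrow> 0 \<in> W"
  unfolding F_subspace_def by simp
lemma Fs_add: "F_subspace F W \<Longrightarrow> x \<in> W \<Longrightarrow> y \<in> W \<Longrightarrow> x + y \<in> W"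
  unfolding F_subspace_def by simp
lemma Fs_scale: "F_subspace F W \<Longrightarrow> c \<in> F \<Longrightarrow> x \<in> W \<Longrightarrow> c *s x \<in> W"
  unfolding F_subspace_def by simp

lemma memU: "w \<in> W \<Longrightarrow> u \<in> S \<Longrightarrow> w + u \<in> {w + u | w u. w \<in> W \<and> u \<in> S}"
  by blast

lemma memUE: "x \<in> {w + u | w u. w \<in> W \<and> u \<in> S} \<Longrightarrow> (\<And>w u. x = w + u \<Longrightarrow> w \<in> W \<Longrightarrow> u \<in> S \<Longrightarrow> P) \<Longrightarrow> P"
  by blast

lemma full_span: "vec.dim (S::('K::field^'n) set) = CARD('n) \<Longrightarrow> vec.span S = UNIV"
  using vec.dim_eq_span[of S UNIV] vec_dim_card[where 'a='K and 'n='n] vec.span_UNIV by simp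

lemma insert_full:
  fixes H :: "('K::field ^ 'n) set"
  assumes Hs: "vec.subspace H" and dH: "vec.dim H = k" and cn: "CARD('n) = k + 1" and vH: "v \<notin> H"
  shows "vec.span (insert v H) = UNIV"
proof -
  have sH: "vec.span H = H" using Hs by simp
  have "vec.dim (insert v H) = k + 1"
    using vec.dim_insert[of v H] vH dH sH by simp
  then show ?thesis using full_span cn by metis
qed

lemma U_subspace:
  fixes W :: "('a::field ^ 'n) set"
  assumes F: "is_subfield F" and W: "F_subspace F W"
  shows "F_subspace F {w + u | w u. w \<in> W \<and> u \<in> vec.span {v}}"
  unfolding F_subspace_def
proof (intro conjI ballI)
  have "0 + 0 \<in> {w + u | w u. w \<in> W \<and> u \<in> vec.span {v}}"
    by (rule memU[OF Fs_0[OF W] vec.span_zero])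
  then show "0 \<in> {w + u | w u. w \<in> W \<and> u \<in> vec.span {v}}" by simp
next
  fix x y assume x: "x \<in> {w + u | w u. w \<in> W \<and> u \<in> vec.span {v}}"
    and y: "y \<in> {w + u | w u. w \<in> W \<and> u \<in> vec.span {v}}"
  obtain w1 u1 where 1: "x = w1 + u1" "w1 \<in> W" "u1 \<in> vec.span {v}" using x by (rule memUE)
  obtain w2 u2 where 2: "y = w2 + u2" "w2 \<in> W" "u2 \<in> vec.span {v}" using y by (rule memUE)
  have e: "x + y = (w1 + w2) + (u1 + u2)" using 1 2 by (simp add: algebra_simps)
  show "x + y \<in> {w + u | w u. w \<in> W \<and> u \<in> vec.span {v}}"
    unfolding e by (rule memU[OF Fs_add[OF W 1(2) 2(2)] vec.span_add[OF 1(3) 2(3)]])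
next
  fix c x assume c: "c \<in> F" and x: "x \<in> {w + u | w u. w \<in> W \<and> u \<in> vec.span {v}}"
  obtain w u where 1: "x = w + u" "w \<in> W" "u \<in> vec.span {v}" using x by (rule memUE)
  have e: "c *s x = c *s w + c *s u" using 1 by (simp add: vec.scale_right_distrib)
  show "c *s x \<in> {w + u | w u. w \<in> W \<and> u \<in> vec.span {v}}"
    unfolding e by (rule memU[OF Fs_scale[OF W c 1(2)] vec.span_scale[OF 1(3)]])
qed

lemma U_card:
  fixes H W :: "('K::{field,finite} ^ 'n) set"
  assumes Hs: "vec.subspace H" and WH: "W \<subseteq> H" and vH: "v \<notin> H"
  shows "card {w + u | w u. w \<in> W \<and> u \<in> vec.span {v}} = card W * CARD('K)"
proof -
  define Kv where "Kv = vec.span {v}"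
  have v0: "v \<noteq> 0" using vH vec.subspace_0[OF Hs] by auto
  have Kv: "Kv = range (\<lambda>c. c *s v)" unfolding Kv_def by (rule vec.span_singleton)
  have cKv: "card Kv = CARD('K)"
  proof -
    have "inj (\<lambda>c::'K. c *s v)" using v0 by (auto intro: injI)
    then show ?thesis unfolding Kv by (simp add: card_image)
  qed
  have HKv: "\<And>x. x \<in> H \<Longrightarrow> x \<in> Kv \<Longrightarrow> x = 0"
  proof -
    fix x assume xH: "x \<in> H" and xK: "x \<in> Kv"
    then obtain c where c: "x = c *s v" using Kv by blast
    show "x = 0"
    proof (rule ccontr)
      assume "x \<noteq> 0"
      then have "c \<noteq> 0" using c by simp
      then have "v = inverse c *s x" using c by (simp add: vector_smult_assoc)
      then show False using vH vec.subspace_scale[OF Hs xH] by metis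
    qed
  qed
  have Uimg: "{w + u | w u. w \<in> W \<and> u \<in> vec.span {v}} = (\<lambda>(w, u). w + u) ` (W \<times> Kv)"
  proof (intro equalityI subsetI)
    fix x assume "x \<in> {w + u | w u. w \<in> W \<and> u \<in> vec.span {v}}"
    then obtain w u where 1: "x = w + u" "w \<in> W" "u \<in> vec.span {v}" by (rule memUE)
    show "x \<in> (\<lambda>(w, u). w + u) ` (W \<times> Kv)"
      by (rule image_eqI[of _ _ "(w, u)"]) (simp_all add: 1 Kv_def)
  next
    fix x assume "x \<in> (\<lambda>(w, u). w + u) ` (W \<times> Kv)"
    then obtain w u where 1: "x = w + u" "w \<in> W" "u \<in> Kv" by auto
    show "x \<in> {w + u | w u. w \<in> W \<and> u \<in> vec.span {v}}"
      unfolding 1(1) by (rule memU[OF 1(2) 1(3)[unfolded Kv_def]])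
  qed
  have injU: "inj_on (\<lambda>(w, u). w + u) (W \<times> Kv)"
  proof (rule inj_onI, clarify)
    fix w1 u1 w2 u2 assume a: "w1 \<in> W" "u1 \<in> Kv" "w2 \<in> W" "u2 \<in> Kv" "w1 + u1 = w2 + u2"
    have "w1 - w2 \<in> H" using a(1,3) WH vec.subspace_diff[OF Hs] by blast
    moreover have "w1 - w2 = u2 - u1" using a(5) by (simp add: algebra_simps)
    moreover have "u2 - u1 \<in> Kv" unfolding Kv_def using a(2,4) unfolding Kv_def by (rule vec.span_diff[rotated])
    ultimately have "w1 - w2 = 0" using HKv by metis
    then show "w1 = w2 \<and> u1 = u2" using a(5) by simp
  qed
  show ?thesis unfolding Uimg card_image[OF injU] card_cartesian_product cKv ..
qed

lemma main:
  fixes Fq :: "'K::{field,finite} set"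
    and q k m t :: nat
    and H W :: "('K ^ 'n) set"
    and v :: "'K ^ 'n"
  assumes q1: "1 < q"
    and Fq: "is_subfield Fq" and cFq: "card Fq = q"
    and cK: "CARD('K) = q ^ m"
    and k0: "k > 0"
    and cn: "CARD('n) = k + 1"
    and hH: "hyperplane H"
    and WH: "W \<subseteq> H" and Wsub: "F_subspace Fq W" and Wdim: "F_dim_eq Fq W t"
    and spW: "vec.span W = H"
    and cut: "\<forall>H'. hyperplane_of H H' \<longrightarrow> vec.span (W \<inter> H') = H'"
    and vH: "v \<notin> H"
  shows "is_system Fq (t + m) (k + 1) {w + u | w u. w \<in> W \<and> u \<in> vec.span {v}}
         \<and> cutting {w + u | w u. w \<in> W \<and> u \<in> vec.span {v}}"
proof -
  define U where "U = {w + u | w u. w \<in> W \<and> u \<in> vec.span {v}}"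
  have Hs: "vec.subspace H" and dH: "vec.dim H = k" using hH cn unfolding hyperplane_def by auto
  have W0: "0 \<in> W" by (rule Fs_0[OF Wsub])
  have WU: "W \<subseteq> U"
  proof
    fix x assume xW: "x \<in> W"
    have "x + 0 \<in> U" unfolding U_def by (rule memU[OF xW vec.span_zero])
    then show "x \<in> U" by simp
  qed
  have vU: "v \<in> U"
  proof -
    have "0 + v \<in> U" unfolding U_def by (rule memU[OF W0 vec.span_base]) simp
    then show ?thesis by simp
  qed
  have Usub: "F_subspace Fq U" unfolding U_def by (rule U_subspace[OF Fq Wsub])
  have spanU: "vec.span U = UNIV"
  proof -
    have "vec.span (insert v H) = UNIV" by (rule insert_full[OF Hs dH cn vH])
    moreover have "insert v H \<subseteq> vec.span U"
      using spW vec.span_mono[OF WU] vU vec.span_base by blast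
    ultimately have "UNIV \<subseteq> vec.span U"
      using vec.span_minimal[OF _ vec.subspace_span] by metis
    then show ?thesis by blast
  qed
  obtain BW where BW: "BW \<subseteq> W" "F_independent Fq BW" "F_span Fq BW = W" "card BW = t"
    using Wdim unfolding F_dim_eq_def by blast
  have cW: "card W = q ^ t" using card_F_span[OF Fq BW(2)] BW(3,4) cFq by simp
  have cU: "card U = q ^ (t + m)"
    unfolding U_def U_card[OF Hs WH vH] cW cK by (simp add: power_add)
  obtain BU where BU: "BU \<subseteq> U" "F_independent Fq BU" "F_span Fq BU = U"
    using F_basis_exists[OF Fq Usub] by blast
  have "q ^ card BU = q ^ (t + m)" using card_F_span[OF Fq BU(2)] BU(3) cFq cU by simp
  then have "card BU = t + m" using q1 power_inject_exp by blast
  then have dimU: "F_dim_eq Fq U (t + m)" unfolding F_dim_eq_def using BU by blast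
  have sys: "is_system Fq (t + m) (k + 1) U"
    unfolding is_system_def using cn Usub dimU spanU by simp
  have "cutting U"
    unfolding cutting_def
  proof (intro allI impI)
    fix P :: "('K ^ 'n) set" assume hP: "hyperplane P"
    have Ps: "vec.subspace P" and dP: "vec.dim P = k" using hP cn unfolding hyperplane_def by auto
    have sPU: "vec.span (P \<inter> U) \<subseteq> P" using vec.span_minimal[OF _ Ps] by blast
    show "vec.span (P \<inter> U) = P"
    proof (cases "P = H")
      case True
      have "W \<subseteq> P \<inter> U" using True WH WU by blast
      then have "H \<subseteq> vec.span (P \<inter> U)" using spW vec.span_mono by metis
      then show ?thesis using sPU True by blast
    next
      case False
      have nHP: "\<not> H \<subseteq> P" using vec.subspace_dim_equal[OF Hs Ps] dH dP False by auto
      then have "\<not> W \<subseteq> P" using spW vec.span_minimal[OF _ Ps] by blast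
      then obtain w where wW: "w \<in> W" and wP: "w \<notin> P" by blast
      obtain u where uP: "u \<in> P" and uU: "u \<in> U" and uH: "u \<notin> H"
      proof (cases "v \<in> P")
        case True then show ?thesis using that vU vH by blast
      next
        case False
        have "vec.span (insert w P) = UNIV" by (rule insert_full[OF Ps dP cn wP])
        then have "v \<in> vec.span (insert w P)" by simp
        then obtain c where c: "v - c *s w \<in> vec.span P" using vec.span_breakdown_eq by blast
        then have cP: "v - c *s w \<in> P" unfolding vec.span_eq_iff[THEN iffD2, OF Ps] .
        have c0: "c \<noteq> 0" using cP False by auto
        define u where "u = (- 1) *s w + inverse c *s v"
        have "u = inverse c *s (v - c *s w)" using c0 unfolding u_def
          by (simp add: vec.scale_right_diff_distrib vector_smult_assoc)
        then have "u \<in> P" using vec.subspace_scale[OF Ps cP] by simp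
        moreover have "u \<in> U"
        proof -
          have "(- 1) *s w \<in> W" by (rule Fs_scale[OF Wsub sf_neg[OF Fq sf_one[OF Fq]] wW])
          moreover have "inverse c *s v \<in> vec.span {v}" by (simp add: vec.span_base vec.span_scale)
          ultimately show ?thesis unfolding U_def u_def by (rule memU)
        qed
        moreover have "u \<notin> H"
        proof
          assume "u \<in> H"
          have "inverse c *s v = u + w" unfolding u_def by simp
          also have "\<dots> \<in> H" using \<open>u \<in> H\<close> wW WH vec.subspace_add[OF Hs] by blast
          finally have "c *s (inverse c *s v) \<in> H" using vec.subspace_scale[OF Hs] by blast
          then show False using c0 vH by (simp add: vector_smult_assoc)
        qed
        ultimately show ?thesis using that by blast
      qed
      have PHs: "vec.subspace (P \<inter> H)" using vec.subspace_inter[OF Ps Hs] .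
      define S where "S = {x + y |x y. x \<in> P \<and> y \<in> H}"
      have "vec.dim S = k + 1"
      proof -
        have sub: "vec.subspace S" unfolding S_def by (rule vec.subspace_sums[OF Ps Hs])
        have full: "vec.span (insert u H) = UNIV" by (rule insert_full[OF Hs dH cn uH])
        have incl: "insert u H \<subseteq> S"
        proof
          fix x assume "x \<in> insert u H"
          then show "x \<in> S"
          proof
            assume xu: "x = u"
            have "u + 0 \<in> S" unfolding S_def by (rule memU[OF uP vec.subspace_0[OF Hs]])
            then show ?thesis unfolding xu by (simp only: add_0_right)
          next
            assume xH: "x \<in> H"
            have "0 + x \<in> S" unfolding S_def by (rule memU[OF vec.subspace_0[OF Ps] xH])
            then show ?thesis by (simp only: add_0_left)
          qed
        qed
        have "vec.span (insert u H) \<subseteq> S" by (rule vec.span_minimal[OF incl sub])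
        then have SU: "S = UNIV" unfolding full by (rule top.extremum_uniqueI)
        show ?thesis unfolding SU vec_dim_card cn ..
      qed
      then have dPH: "vec.dim (P \<inter> H) = k - 1" using vec.dim_sums_Int[OF Ps Hs] dP dH unfolding S_def by simp
      have "hyperplane_of H (P \<inter> H)" unfolding hyperplane_of_def using PHs dPH dH by simp
      then have spPH: "vec.span (W \<inter> (P \<inter> H)) = P \<inter> H" using cut by blast
      have "W \<inter> (P \<inter> H) \<subseteq> P \<inter> U" using WU by blast
      then have "P \<inter> H \<subseteq> vec.span (P \<inter> U)" using spPH vec.span_mono by metis
      then have SS: "insert u (P \<inter> H) \<subseteq> vec.span (P \<inter> U)" using uP uU vec.span_base by blast
      have sPH: "vec.span (P \<inter> H) = P \<inter> H" using PHs by simp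
      have "u \<notin> vec.span (P \<inter> H)" unfolding sPH using uH by blast
      then have "vec.dim (insert u (P \<inter> H)) = k" using vec.dim_insert[of u "P \<inter> H"] dPH k0 by simp
      then have "k \<le> vec.dim (vec.span (P \<inter> U))" using vec.dim_subset[OF SS] by simp
      then show ?thesis using vec.subspace_dim_equal[OF vec.subspace_span Ps sPU] dP by simp
    qed
  qed
  then show ?thesis using sys unfolding U_def by simp
qed


theorem proposition3p7:
  fixes Fq :: "'K::{field,finite} set"
    and q k m t :: nat
    and H W :: "('K ^ 'n) set"
    and v :: "'K ^ 'n"
  assumes "primepow q"
    and "is_subfield Fq" and "card Fq = q"
    and "CARD('K) = q ^ m"
    and "k > 0" and "m > 0" and "t > 0"
    and "CARD('n) = k + 1"
    and "hyperplane H"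
    and "W \<subseteq> H" and "F_subspace Fq W" and "F_dim_eq Fq W t"
    and "vec.span W = H"
    and "\<forall>H'. hyperplane_of H H' \<longrightarrow> vec.span (W \<inter> H') = H'"
    and "v \<notin> H"
  shows "is_system Fq (t + m) (k + 1) {w + u | w u. w \<in> W \<and> u \<in> vec.span {v}}
         \<and> cutting {w + u | w u. w \<in> W \<and> u \<in> vec.span {v}}"
    using main[OF primepow_gt_Suc_0[OF assms(1), unfolded One_nat_def[symmetric]] assms(2-4,5,8-15)] .

end
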